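(* Let $V_1,\dots,V_N>0$ be fixed strengths and let $(X_{i,j})_{1\le i<j\le N}$ be independent Bernoulli variables under $\mathbb{P}_V$ with $\mathbb{P}_V(X_{i,j}=1)=\frac{V_i}{V_i+V_j}$; set $X_{j,i}=1-X_{i,j}$, $S_i=\sum_{j\ne i}X_{i,j}$ and $Z_N=\max_{1\le i\le N}S_i$. Then for any $a>0$, \[\mathbb{P}_V(Z_N\le a)\le\prod_{i=1}^N\mathbb{P}_V(S_i\le a).\]
   Context: In the paper the strengths are order statistics of i.i.d. positive random variables and the statement is made $\mathbb{P}$-almost surely for the conditional probability $\mathbb{P}_V$ given the strengths; this is equivalent to the statement for arbitrary fixed positive strengths. *)

theory Defs
  imports "HOL-Probability.Probability"
begin

text \<open>Players are indexed by 1..N. The outcome of a tournament is a function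
  on pairs; for 1 \<le> i < j \<le> N the value at (i,j) is True iff X_{i,j} = 1.\<close>

definition pairs :: "nat \<Rightarrow> (nat \<times> nat) set" where
  "pairs N = {(i, j). 1 \<le> i \<and> i < j \<and> j \<le> N}"

definition tournament_pmf :: "nat \<Rightarrow> (nat \<Rightarrow> real) \<Rightarrow> ((nat \<times> nat) \<Rightarrow> bool) pmf" where
  "tournament_pmf N V =
     Pi_pmf (pairs N) False (\<lambda>(i, j). bernoulli_pmf (V i / (V i + V j)))"

definition Xwin :: "((nat \<times> nat) \<Rightarrow> bool) \<Rightarrow> nat \<Rightarrow> nat \<Rightarrow> nat" where
  "Xwin \<omega> i j = (if i < j then (if \<omega> (i, j) then 1 else 0)
                  else (if \<omega> (j, i) then 0 else 1))"

definition score :: "nat \<Rightarrow> ((nat \<times> nat) \<Rightarrow> bool) \<Rightarrow> nat \<Rightarrow> nat" where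
  "score N \<omega> i = (\<Sum>j\<in>{1..N} - {i}. Xwin \<omega> i j)"

definition maxscore :: "nat \<Rightarrow> ((nat \<times> nat) \<Rightarrow> bool) \<Rightarrow> nat" where
  "maxscore N \<omega> = Max (score N \<omega> ` {1..N})"

end

theory Submission
  imports Defs
begin

type_synonym om = "(nat \<times> nat) \<Rightarrow> bool"

lemma fin_Pi:
  assumes "finite E"
  shows "finite (set_pmf (Pi_pmf E False (\<lambda>e. bernoulli_pmf (q e))))"
proof -
  have "finite (PiE_dflt E False (set_pmf \<circ> (\<lambda>e. bernoulli_pmf (q e))))"
    using assms by (intro finite_PiE_dflt) auto
  then show ?thesis by (rule finite_subset[OF set_Pi_pmf_subset'[OF assms]])
qed

lemma exp_pair:
  fixes h :: "'a \<times> 'b \<Rightarrow> real"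
  assumes fA: "finite (set_pmf A)" and fB: "finite (set_pmf B)"
  shows "measure_pmf.expectation (pair_pmf A B) h
       = measure_pmf.expectation A (\<lambda>a. measure_pmf.expectation B (\<lambda>b. h (a, b)))"
proof -
  have "measure_pmf.expectation (pair_pmf A B) h
      = (\<Sum>x\<in>set_pmf A \<times> set_pmf B. h x * pmf (pair_pmf A B) x)"
    using fA fB by (intro integral_measure_pmf_real) auto
  also have "\<dots> = (\<Sum>a\<in>set_pmf A. \<Sum>b\<in>set_pmf B. h (a,b) * pmf B b * pmf A a)"
    unfolding sum.cartesian_product by (intro sum.cong) (auto simp: pmf_pair mult_ac)
  also have "\<dots> = (\<Sum>a\<in>set_pmf A. (\<Sum>b\<in>set_pmf B. h (a,b) * pmf B b) * pmf A a)"
    by (simp add: sum_distrib_right)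
  also have "\<dots> = measure_pmf.expectation A (\<lambda>a. measure_pmf.expectation B (\<lambda>b. h (a, b)))"
    using fA fB by (subst integral_measure_pmf_real[of "set_pmf A"])
       (auto intro!: sum.cong simp: integral_measure_pmf_real[of "set_pmf B"])
  finally show ?thesis .
qed

lemma exp_insert:
  fixes H :: "om \<Rightarrow> real"
  assumes "finite E" "e \<notin> E" "0 \<le> q e" "q e \<le> 1"
  shows "measure_pmf.expectation (Pi_pmf (insert e E) False (\<lambda>e. bernoulli_pmf (q e))) H
    = q e * measure_pmf.expectation (Pi_pmf E False (\<lambda>e. bernoulli_pmf (q e))) (\<lambda>w. H (w(e:=True)))
      + (1 - q e) * measure_pmf.expectation (Pi_pmf E False (\<lambda>e. bernoulli_pmf (q e))) (\<lambda>w. H (w(e:=False)))"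
proof -
  let ?P = "Pi_pmf E False (\<lambda>e. bernoulli_pmf (q e))"
  have "measure_pmf.expectation (Pi_pmf (insert e E) False (\<lambda>e. bernoulli_pmf (q e))) H
     = measure_pmf.expectation (map_pmf (\<lambda>(y,f). f(e:=y)) (pair_pmf (bernoulli_pmf (q e)) ?P)) H"
    using assms by (simp add: Pi_pmf_insert)
  also have "\<dots> = measure_pmf.expectation (pair_pmf (bernoulli_pmf (q e)) ?P) (\<lambda>x. H ((\<lambda>(y,f). f(e:=y)) x))"
    by (rule integral_map_pmf)
  also have "\<dots> = measure_pmf.expectation (bernoulli_pmf (q e)) (\<lambda>y. measure_pmf.expectation ?P (\<lambda>f. H (f(e:=y))))"
    by (subst exp_pair[OF _ fin_Pi[OF assms(1)]]) (auto intro: finite_subset[OF subset_UNIV])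
  finally show ?thesis using assms by (simp add: algebra_simps)
qed

definition adapt :: "(nat \<times> nat) set \<Rightarrow> nat set \<Rightarrow> (om \<Rightarrow> real) \<Rightarrow> bool" where
  "adapt E A F \<longleftrightarrow> (\<forall>e\<in>E. \<forall>w.
     (fst e \<in> A \<and> snd e \<notin> A \<longrightarrow> F (w(e:=True)) \<le> F (w(e:=False))) \<and>
     (fst e \<notin> A \<and> snd e \<in> A \<longrightarrow> F (w(e:=False)) \<le> F (w(e:=True))) \<and>
     (fst e \<notin> A \<and> snd e \<notin> A \<longrightarrow> F (w(e:=True)) = F (w(e:=False))))"

lemma adapt_upd:
  assumes "adapt (insert e E) A F" "e \<notin> E"
  shows "adapt E A (\<lambda>w. F (w(e:=x)))"
  unfolding adapt_def
proof (intro ballI allI)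
  fix e' w assume e': "e' \<in> E"
  then have ne: "e' \<noteq> e" using assms(2) by auto
  have sw: "\<And>y. w(e':=y, e:=x) = (w(e:=x))(e':=y)" using ne by (simp add: fun_upd_twist)
  show "(fst e' \<in> A \<and> snd e' \<notin> A \<longrightarrow> F (w(e':=True, e:=x)) \<le> F (w(e':=False, e:=x))) \<and>
     (fst e' \<notin> A \<and> snd e' \<in> A \<longrightarrow> F (w(e':=False, e:=x)) \<le> F (w(e':=True, e:=x))) \<and>
     (fst e' \<notin> A \<and> snd e' \<notin> A \<longrightarrow> F (w(e':=True, e:=x)) = F (w(e':=False, e:=x)))"
    unfolding sw using assms(1) e' unfolding adapt_def by blast
qed

lemma adapt_sub: "adapt (insert e E) A F \<Longrightarrow> adapt E A F"
  unfolding adapt_def by blast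

lemma NA:
  fixes F G :: "om \<Rightarrow> real"
  assumes "finite E" "\<And>e. e \<in> E \<Longrightarrow> 0 \<le> q e \<and> q e \<le> 1" "A \<inter> B = {}"
    "adapt E A F" "adapt E B G"
  shows "measure_pmf.expectation (Pi_pmf E False (\<lambda>e. bernoulli_pmf (q e))) (\<lambda>w. F w * G w)
    \<le> measure_pmf.expectation (Pi_pmf E False (\<lambda>e. bernoulli_pmf (q e))) F *
      measure_pmf.expectation (Pi_pmf E False (\<lambda>e. bernoulli_pmf (q e))) G"
  using assms(1,2,4,5)
proof (induction E arbitrary: F G rule: finite_induct)
  case empty
  then show ?case by simp
next
  case (insert e E)
  let ?P = "Pi_pmf E False (\<lambda>e. bernoulli_pmf (q e))"
  let ?Ex = "measure_pmf.expectation ?P"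
  have q: "0 \<le> q e" "q e \<le> 1" using insert.prems by auto
  define a1 where "a1 = ?Ex (\<lambda>w. F (w(e:=True)))"
  define a0 where "a0 = ?Ex (\<lambda>w. F (w(e:=False)))"
  define b1 where "b1 = ?Ex (\<lambda>w. G (w(e:=True)))"
  define b0 where "b0 = ?Ex (\<lambda>w. G (w(e:=False)))"
  have IH: "?Ex (\<lambda>w. F (w(e:=x)) * G (w(e:=x))) \<le> ?Ex (\<lambda>w. F (w(e:=x))) * ?Ex (\<lambda>w. G (w(e:=x)))" for x
    using insert.IH[of "\<lambda>w. F (w(e:=x))" "\<lambda>w. G (w(e:=x))"] insert.prems insert.hyps
    by (auto intro: adapt_upd)
  have int: "integrable ?P f" for f :: "om \<Rightarrow> real"
    by (rule integrable_measure_pmf_finite[OF fin_Pi[OF insert.hyps(1)]])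
  have monoE: "(\<And>w. f w \<le> g w) \<Longrightarrow> ?Ex f \<le> ?Ex g" for f g :: "om \<Rightarrow> real"
    by (rule integral_mono[OF int int]) auto
  have eqE: "(\<And>w. f w = g w) \<Longrightarrow> ?Ex f = ?Ex g" for f g :: "om \<Rightarrow> real"
    by (metis ext)
  have FA: "adapt (insert e E) A F" and GB: "adapt (insert e E) B G" using insert.prems by auto
  have key: "(a1 - a0) * (b1 - b0) \<le> 0"
  proof (cases "fst e \<in> A \<or> snd e \<in> A")
    case False
    then have "a1 = a0" unfolding a1_def a0_def
      using FA unfolding adapt_def by (intro eqE) auto
    then show ?thesis by simp
  next
    case TA: True
    show ?thesis
    proof (cases "fst e \<in> B \<or> snd e \<in> B")
      case False
      then have "b1 = b0" unfolding b1_def b0_def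
        using GB unfolding adapt_def by (intro eqE) auto
      then show ?thesis by simp
    next
      case TB: True
      show ?thesis
      proof (cases "fst e \<in> A")
        case True
        then have "snd e \<in> B" "snd e \<notin> A" "fst e \<notin> B" using TB assms(3) by auto
        then have "a1 \<le> a0" "b0 \<le> b1" unfolding a1_def a0_def b1_def b0_def
          using FA GB True unfolding adapt_def by (auto intro!: monoE)
        then show ?thesis by (simp add: mult_nonneg_nonpos2)
      next
        case False
        then have "snd e \<in> A" "fst e \<in> B" "snd e \<notin> B" using TA TB assms(3) by auto
        then have "a0 \<le> a1" "b1 \<le> b0" unfolding a1_def a0_def b1_def b0_def
          using FA GB False unfolding adapt_def by (auto intro!: monoE)
        then show ?thesis by (simp add: mult_nonneg_nonpos)
      qed
    qed
  qed
  have "measure_pmf.expectation (Pi_pmf (insert e E) False (\<lambda>e. bernoulli_pmf (q e))) (\<lambda>w. F w * G w)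
     = q e * ?Ex (\<lambda>w. F (w(e:=True)) * G (w(e:=True))) + (1 - q e) * ?Ex (\<lambda>w. F (w(e:=False)) * G (w(e:=False)))"
    using insert.hyps q by (rule exp_insert)
  also have "\<dots> \<le> q e * (a1 * b1) + (1 - q e) * (a0 * b0)"
    unfolding a1_def a0_def b1_def b0_def
    using IH[of True] IH[of False] q by (intro add_mono mult_left_mono) auto
  also have "\<dots> \<le> (q e * a1 + (1 - q e) * a0) * (q e * b1 + (1 - q e) * b0)"
  proof -
    have "(q e * a1 + (1 - q e) * a0) * (q e * b1 + (1 - q e) * b0) - (q e * (a1 * b1) + (1 - q e) * (a0 * b0))
       = - (q e * (1 - q e) * ((a1 - a0) * (b1 - b0)))" by (simp add: algebra_simps)
    moreover have "q e * (1 - q e) \<ge> 0" using q by simp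
    moreover have "q e * (1 - q e) * ((a1 - a0) * (b1 - b0)) \<le> 0"
      using mult_nonneg_nonpos[OF \<open>q e * (1 - q e) \<ge> 0\<close> key] .
    ultimately show ?thesis by linarith
  qed
  also have "\<dots> = measure_pmf.expectation (Pi_pmf (insert e E) False (\<lambda>e. bernoulli_pmf (q e))) F *
      measure_pmf.expectation (Pi_pmf (insert e E) False (\<lambda>e. bernoulli_pmf (q e))) G"
    unfolding a1_def a0_def b1_def b0_def
    using insert.hyps q by (simp add: exp_insert)
  finally show ?case .
qed


lemma score_other:
  assumes "i \<noteq> u" "i \<noteq> v"
  shows "score N (w((u,v):=b)) i = score N w i"
  unfolding score_def using assms by (intro sum.cong) (auto simp: Xwin_def)

lemma score_fst:
  assumes "u < v"
  shows "score N (w((u,v):=False)) u \<le> score N (w((u,v):=True)) u"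
  unfolding score_def using assms by (intro sum_mono) (auto simp: Xwin_def)

lemma score_snd:
  assumes "u < v"
  shows "score N (w((u,v):=True)) v \<le> score N (w((u,v):=False)) v"
  unfolding score_def using assms by (intro sum_mono) (auto simp: Xwin_def)

definition ind :: "nat \<Rightarrow> real \<Rightarrow> nat \<Rightarrow> om \<Rightarrow> real" where
  "ind N a i w = (if real (score N w i) \<le> a then 1 else 0)"

lemma ind_nonneg: "0 \<le> ind N a i w" by (simp add: ind_def)

lemma adapt_prod:
  assumes "finite I"
  shows "adapt (pairs N) I (\<lambda>w. \<Prod>i\<in>I. ind N a i w)"
  unfolding adapt_def
proof (intro ballI allI conjI impI)
  fix e w assume e: "e \<in> pairs N"
  obtain u v where uv: "e = (u,v)" "u < v" using e by (cases e) (auto simp: pairs_def)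
  have oth: "ind N a i (w(e:=b)) = ind N a i w" if "i \<noteq> u" "i \<noteq> v" for i b
    unfolding ind_def uv using score_other[OF that] by simp
  have fst: "ind N a u (w(e:=True)) \<le> ind N a u (w(e:=False))"
    unfolding ind_def uv using score_fst[OF uv(2), of N w] by auto
  have snd: "ind N a v (w(e:=False)) \<le> ind N a v (w(e:=True))"
    unfolding ind_def uv using score_snd[OF uv(2), of N w] by auto
  { assume "fst e \<in> I \<and> snd e \<notin> I"
    then have "u \<in> I" "v \<notin> I" using uv by auto
    show "(\<Prod>i\<in>I. ind N a i (w(e:=True))) \<le> (\<Prod>i\<in>I. ind N a i (w(e:=False)))"
    proof (rule prod_mono)
      fix i assume "i \<in> I"
      then show "0 \<le> ind N a i (w(e:=True)) \<and> ind N a i (w(e:=True)) \<le> ind N a i (w(e:=False))"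
      proof -
        have "i \<noteq> v" using \<open>i \<in> I\<close> \<open>v \<notin> I\<close> by auto
        then show ?thesis using fst oth[of i True] oth[of i False] by (cases "i = u") (auto simp: ind_nonneg)
      qed
    qed }
  { assume "fst e \<notin> I \<and> snd e \<in> I"
    then have "u \<notin> I" "v \<in> I" using uv by auto
    show "(\<Prod>i\<in>I. ind N a i (w(e:=False))) \<le> (\<Prod>i\<in>I. ind N a i (w(e:=True)))"
    proof (rule prod_mono)
      fix i assume "i \<in> I"
      then show "0 \<le> ind N a i (w(e:=False)) \<and> ind N a i (w(e:=False)) \<le> ind N a i (w(e:=True))"
      proof -
        have "i \<noteq> u" using \<open>i \<in> I\<close> \<open>u \<notin> I\<close> by auto
        then show ?thesis using snd oth[of i True] oth[of i False] by (cases "i = v") (auto simp: ind_nonneg)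
      qed
    qed }
  { assume "fst e \<notin> I \<and> snd e \<notin> I"
    then have "u \<notin> I" "v \<notin> I" using uv by auto
    show "(\<Prod>i\<in>I. ind N a i (w(e:=True))) = (\<Prod>i\<in>I. ind N a i (w(e:=False)))"
    proof (rule prod.cong[OF refl])
      fix i assume "i \<in> I"
      then have "i \<noteq> u" "i \<noteq> v" using \<open>u \<notin> I\<close> \<open>v \<notin> I\<close> by auto
      then show "ind N a i (w(e:=True)) = ind N a i (w(e:=False))" using oth[of i True] oth[of i False] by simp
    qed }
qed

lemma adapt_single: "adapt (pairs N) {k} (ind N a k)"
  using adapt_prod[of "{k}" N a] by simp

lemma finite_pairs: "finite (pairs N)"
  by (rule finite_subset[of _ "{1..N} \<times> {1..N}"]) (auto simp: pairs_def)

lemma prod_bound: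
  fixes q :: "nat \<times> nat \<Rightarrow> real"
  assumes "\<And>e. e \<in> pairs N \<Longrightarrow> 0 \<le> q e \<and> q e \<le> 1" "finite I"
  shows "measure_pmf.expectation (Pi_pmf (pairs N) False (\<lambda>e. bernoulli_pmf (q e))) (\<lambda>w. \<Prod>i\<in>I. ind N a i w)
     \<le> (\<Prod>i\<in>I. measure_pmf.expectation (Pi_pmf (pairs N) False (\<lambda>e. bernoulli_pmf (q e))) (ind N a i))"
  using assms(2)
proof (induction I rule: finite_induct)
  case empty
  then show ?case by simp
next
  case (insert k I)
  let ?Ex = "measure_pmf.expectation (Pi_pmf (pairs N) False (\<lambda>e. bernoulli_pmf (q e)))"
  have "?Ex (\<lambda>w. \<Prod>i\<in>insert k I. ind N a i w) = ?Ex (\<lambda>w. ind N a k w * (\<Prod>i\<in>I. ind N a i w))"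
    using insert.hyps by simp
  also have "\<dots> \<le> ?Ex (ind N a k) * ?Ex (\<lambda>w. \<Prod>i\<in>I. ind N a i w)"
    using insert.hyps
    by (intro NA[where A="{k}" and B=I] finite_pairs assms(1) adapt_single adapt_prod) auto
  also have "\<dots> \<le> ?Ex (ind N a k) * (\<Prod>i\<in>I. ?Ex (ind N a i))"
    by (intro mult_left_mono insert.IH integral_nonneg) (auto simp: ind_nonneg)
  also have "\<dots> = (\<Prod>i\<in>insert k I. ?Ex (ind N a i))"
    using insert.hyps by simp
  finally show ?case .
qed


lemma ind_indicator: "ind N a i = indicator {w. real (score N w i) \<le> a}"
  by (auto simp: ind_def fun_eq_iff indicator_def)

lemma max_le:
  assumes "N \<ge> 1"
  shows "real (maxscore N w) \<le> a \<longleftrightarrow> (\<forall>i\<in>{1..N}. real (score N w i) \<le> a)"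
proof -
  have fin: "finite (score N w ` {1..N})" and ne: "score N w ` {1..N} \<noteq> {}" using assms by auto
  show ?thesis
  proof
    assume h: "real (maxscore N w) \<le> a"
    show "\<forall>i\<in>{1..N}. real (score N w i) \<le> a"
    proof
      fix i assume "i \<in> {1..N}"
      then have "score N w i \<le> maxscore N w" unfolding maxscore_def using fin by auto
      then show "real (score N w i) \<le> a" using h by linarith
    qed
  next
    assume h: "\<forall>i\<in>{1..N}. real (score N w i) \<le> a"
    have "maxscore N w \<in> score N w ` {1..N}" unfolding maxscore_def using fin ne by (rule Max_in)
    then show "real (maxscore N w) \<le> a" using h by auto
  qed
qed

lemma prod_ind:
  assumes "N \<ge> 1"
  shows "(\<lambda>w. \<Prod>i\<in>{1..N}. ind N a i w) = indicator {w. real (maxscore N w) \<le> a}"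
proof
  fix w
  show "(\<Prod>i\<in>{1..N}. ind N a i w) = indicator {w. real (maxscore N w) \<le> a} w"
  proof (cases "\<forall>i\<in>{1..N}. real (score N w i) \<le> a")
    case True
    then show ?thesis using max_le[OF assms] by (simp add: ind_def indicator_def)
  next
    case False
    then obtain i where "i \<in> {1..N}" "\<not> real (score N w i) \<le> a" by auto
    then have "(\<Prod>i\<in>{1..N}. ind N a i w) = 0"
      by (intro prod_zero) (auto simp: ind_def intro!: bexI[of _ i])
    moreover have "\<not> real (maxscore N w) \<le> a" using max_le[OF assms] False by blast
    ultimately show ?thesis by (simp add: indicator_def)
  qed
qed

theorem lemma8:
  fixes N :: nat and V :: "nat \<Rightarrow> real" and a :: real
  assumes "N \<ge> 1"
    and "\<And>i. i \<in> {1..N} \<Longrightarrow> V i > 0"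
    and "a > 0"
  shows "measure_pmf.prob (tournament_pmf N V) {\<omega>. real (maxscore N \<omega>) \<le> a}
         \<le> (\<Prod>i\<in>{1..N}. measure_pmf.prob (tournament_pmf N V) {\<omega>. real (score N \<omega> i) \<le> a})"
proof -
  define q where "q e = V (fst e) / (V (fst e) + V (snd e))" for e
  have T: "tournament_pmf N V = Pi_pmf (pairs N) False (\<lambda>e. bernoulli_pmf (q e))"
    unfolding tournament_pmf_def q_def by (rule arg_cong[where f="Pi_pmf (pairs N) False"]) (auto simp: fun_eq_iff)
  have qb: "0 \<le> q e \<and> q e \<le> 1" if "e \<in> pairs N" for e
  proof -
    have "V (fst e) > 0" "V (snd e) > 0" using that assms(2) by (auto simp: pairs_def)
    then show ?thesis unfolding q_def by (auto simp: divide_simps)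
  qed
  let ?P = "Pi_pmf (pairs N) False (\<lambda>e. bernoulli_pmf (q e))"
  have "measure_pmf.prob ?P {w. real (maxscore N w) \<le> a}
      = measure_pmf.expectation ?P (\<lambda>w. \<Prod>i\<in>{1..N}. ind N a i w)"
    unfolding prod_ind[OF assms(1)] by simp
  also have "\<dots> \<le> (\<Prod>i\<in>{1..N}. measure_pmf.expectation ?P (ind N a i))"
    by (rule prod_bound) (use qb in auto)
  also have "\<dots> = (\<Prod>i\<in>{1..N}. measure_pmf.prob ?P {w. real (score N w i) \<le> a})"
    unfolding ind_indicator by simp
  finally show ?thesis unfolding T .
qed

end
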